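(* Let $d\in\{2,3\}$, $\kappa>0$, $\sigma^{-1}=2\kappa$, $\rho(s)=(2/s)^{d/2}\Gamma(d/2+1)J_{d/2}(s)$ and $K(x,x')=\rho(\sigma^{-1}|x-x'|)$. Then for all $x,x'\in\mathbb{R}^d$ with $\sigma^{-1}|x-x'|/\sqrt{d+2}\ge 1/\sqrt5$, one has $|K(x,x')|\le 1-\bar\epsilon_0$ with $\bar\epsilon_0=0.07$.
   Context: $J_{d/2}$ is the Bessel function of the first kind of order $d/2$ and $\Gamma$ the Gamma function. $K$ coincides with $\int_{B(0,2\kappa)}e^{i\langle\omega,x-x'\rangle}\,d\Lambda(\omega)$ for $\Lambda$ uniform on $B(0,2\kappa)$. *)

theory Defs
  imports "HOL-Analysis.Analysis"
begin

definition bessel_J :: "real \<Rightarrow> real \<Rightarrow> real" where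
  "bessel_J nu s = (\<Sum>m. (-1) ^ m / (fact m * Gamma (real m + nu + 1)) * (s / 2) powr (2 * real m + nu))"

definition rho :: "nat \<Rightarrow> real \<Rightarrow> real" where
  "rho d s = (2 / s) powr (real d / 2) * Gamma (real d / 2 + 1) * bessel_J (real d / 2) s"

definition kernK :: "real \<Rightarrow> real ^ 'n \<Rightarrow> real ^ 'n \<Rightarrow> real" where
  "kernK kappa x x' = rho CARD('n) ((2 * kappa) * norm (x - x'))"

end

theory Submission imports Defs begin

definition cc :: "real \<Rightarrow> nat \<Rightarrow> real" where
  "cc nu n = (-1) ^ n / (fact n * pochhammer (nu + 1) n)"

definition gg :: "real \<Rightarrow> real \<Rightarrow> real" where
  "gg nu t = (\<Sum>n. cc nu n * t ^ n)"

definition gd :: "real \<Rightarrow> real \<Rightarrow> real" where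
  "gd nu t = (\<Sum>n. diffs (cc nu) n * t ^ n)"

definition gdd :: "real \<Rightarrow> real \<Rightarrow> real" where
  "gdd nu t = (\<Sum>n. diffs (diffs (cc nu)) n * t ^ n)"

lemma poch_ge1: "nu \<ge> 0 \<Longrightarrow> pochhammer (nu + 1) n \<ge> (1::real)"
proof (induction n)
  case 0 then show ?case by simp
next
  case (Suc n)
  have "1 \<le> nu + 1 + real n" using Suc.prems by simp
  then have "1 * 1 \<le> pochhammer (nu + 1) n * (nu + 1 + real n)"
    using Suc by (intro mult_mono) auto
  then show ?case by (simp add: pochhammer_Suc)
qed

lemma cc_bound: "nu \<ge> 0 \<Longrightarrow> \<bar>cc nu n\<bar> \<le> 1 / fact n"
proof -
  assume h: "nu \<ge> 0"
  have p: "pochhammer (nu + 1) n \<ge> 1" using poch_ge1[OF h] .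
  have "\<bar>cc nu n\<bar> = 1 / (fact n * pochhammer (nu + 1) n)"
    using p by (simp add: cc_def abs_mult)
  also have "\<dots> \<le> 1 / fact n"
    using p by (intro divide_left_mono) (auto simp: mult_pos_pos)
  finally show ?thesis .
qed

lemma fact_bound_summable:
  fixes c :: "nat \<Rightarrow> real"
  assumes "\<And>n. \<bar>c n\<bar> \<le> 1 / fact n"
  shows "summable (\<lambda>n. c n * t ^ n)"
proof (rule summable_comparison_test)
  show "\<exists>N. \<forall>n\<ge>N. norm (c n * t ^ n) \<le> \<bar>t\<bar> ^ n / fact n"
  proof (intro exI allI impI)
    fix n :: nat
    have "norm (c n * t ^ n) = \<bar>c n\<bar> * \<bar>t\<bar> ^ n" by (simp add: abs_mult power_abs)
    also have "\<dots> \<le> (1 / fact n) * \<bar>t\<bar> ^ n" by (intro mult_right_mono assms) auto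
    finally show "norm (c n * t ^ n) \<le> \<bar>t\<bar> ^ n / fact n" by simp
  qed
  show "summable (\<lambda>n. \<bar>t\<bar> ^ n / fact n)"
    using summable_exp[of "\<bar>t\<bar>"] by (simp add: divide_inverse mult.commute)
qed

lemma fact_bound_diffs:
  fixes c :: "nat \<Rightarrow> real"
  assumes "\<And>n. \<bar>c n\<bar> \<le> 1 / fact n"
  shows "\<bar>diffs c n\<bar> \<le> 1 / fact n"
proof -
  have "\<bar>diffs c n\<bar> = real (Suc n) * \<bar>c (Suc n)\<bar>" by (simp add: diffs_def abs_mult)
  also have "\<dots> \<le> real (Suc n) * (1 / fact (Suc n))" by (intro mult_left_mono assms) auto
  also have "\<dots> = 1 / fact n"
    using fact_gt_zero[of n, where 'a=real] by (simp add: fact_Suc del: of_nat_Suc)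
  finally show ?thesis .
qed

lemma fact_bound_Suc:
  fixes c :: "nat \<Rightarrow> real"
  assumes "\<And>n. \<bar>c n\<bar> \<le> 1 / fact n"
  shows "\<bar>c (Suc n)\<bar> \<le> 1 / fact n"
proof -
  have "\<bar>c (Suc n)\<bar> \<le> 1 / fact (Suc n)" by (rule assms)
  also have "\<dots> \<le> 1 / fact n" by (intro divide_left_mono) (auto simp: fact_mono)
  finally show ?thesis .
qed

lemma ode:
  assumes nu: "nu \<ge> 0"
  shows "t * gdd nu t + (nu + 1) * gd nu t + gg nu t = 0"
proof -
  let ?c = "cc nu"
  have b0: "\<And>n. \<bar>?c n\<bar> \<le> 1 / fact n" using cc_bound nu by blast
  have b1: "\<And>n. \<bar>diffs ?c n\<bar> \<le> 1 / fact n" using fact_bound_diffs b0 by blast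
  have b2: "\<And>n. \<bar>diffs (diffs ?c) n\<bar> \<le> 1 / fact n" using fact_bound_diffs b1 by blast
  have s0: "summable (\<lambda>n. ?c n * t ^ n)" using fact_bound_summable b0 by blast
  have s1: "summable (\<lambda>n. diffs ?c n * t ^ n)" using fact_bound_summable b1 by blast
  have s2: "summable (\<lambda>n. diffs (diffs ?c) n * t ^ n)" using fact_bound_summable b2 by blast
  have s0': "summable (\<lambda>n. ?c (Suc n) * t ^ n)"
    using fact_bound_summable[of "\<lambda>n. ?c (Suc n)"] fact_bound_Suc[OF b0] by blast
  have s1': "summable (\<lambda>n. diffs ?c (Suc n) * t ^ n)"
    using fact_bound_summable[of "\<lambda>n. diffs ?c (Suc n)"] fact_bound_Suc[OF b1] by blast
  have e0: "gg nu t = ?c 0 + (\<Sum>n. ?c (Suc n) * t ^ n) * t"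
    unfolding gg_def by (rule powser_split_head(1)[OF s0])
  have e1: "gd nu t = diffs ?c 0 + (\<Sum>n. diffs ?c (Suc n) * t ^ n) * t"
    unfolding gd_def by (rule powser_split_head(1)[OF s1])
  have c0: "?c 0 + (nu + 1) * diffs ?c 0 = 0"
    using nu by (simp add: diffs_def cc_def)
  have cn: "diffs (diffs ?c) n + (nu + 1) * diffs ?c (Suc n) + ?c (Suc n) = 0" for n
  proof -
    define F where "F = (fact n :: real)"
    define P where "P = pochhammer (nu + 1) (Suc n)"
    define q where "q = nu + 1 + real (Suc n)"
    define S where "S = ((-1::real) ^ n)"
    have F: "F > 0" unfolding F_def by simp
    have pp: "P > 0" unfolding P_def using nu by (intro pochhammer_pos) auto
    have q: "q > 0" unfolding q_def using nu by simp
    have e2: "?c (Suc (Suc n)) = S / ((real n + 1) * (real n + 2) * F * P * q)"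
      unfolding cc_def S_def F_def P_def q_def by (simp add: pochhammer_Suc fact_Suc algebra_simps)
    have e1: "?c (Suc n) = - S / ((real n + 1) * F * P)"
      unfolding cc_def S_def F_def P_def q_def by (simp add: fact_Suc algebra_simps)
    have "diffs (diffs ?c) n + (nu + 1) * diffs ?c (Suc n) + ?c (Suc n)
       = (real n + 1) * (real n + 2) * ?c (Suc (Suc n)) + (nu + 1) * (real n + 2) * ?c (Suc (Suc n)) + ?c (Suc n)"
      by (simp add: diffs_def algebra_simps)
    also have "\<dots> = (real n + 2) * q * ?c (Suc (Suc n)) + ?c (Suc n)"
      unfolding q_def by (simp add: algebra_simps)
    also have "(real n + 2) * q * ?c (Suc (Suc n)) = S / ((real n + 1) * F * P)"
    proof -
      have a: "real n + 1 \<noteq> 0" "real n + 2 \<noteq> 0" "F \<noteq> 0" "P \<noteq> 0" "q \<noteq> 0"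
        using F pp q by auto
      have gen: "\<And>A B. A \<noteq> 0 \<Longrightarrow> B \<noteq> 0 \<Longrightarrow> B * q * (S / (A * B * F * P * q)) = S / (A * F * P)"
        using a by (simp add: field_simps)
      show ?thesis unfolding e2 by (rule gen) (use a in auto)
    qed
    also have "S / ((real n + 1) * F * P) + ?c (Suc n) = 0" unfolding e1 by simp
    finally show ?thesis .
  qed
  have "t * gdd nu t + (nu + 1) * gd nu t + gg nu t
      = (?c 0 + (nu + 1) * diffs ?c 0) + t * ((\<Sum>n. diffs (diffs ?c) n * t ^ n)
          + (nu + 1) * (\<Sum>n. diffs ?c (Suc n) * t ^ n) + (\<Sum>n. ?c (Suc n) * t ^ n))"
    unfolding e0 e1 gdd_def by (simp add: algebra_simps)
  also have "(\<Sum>n. diffs (diffs ?c) n * t ^ n)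
          + (nu + 1) * (\<Sum>n. diffs ?c (Suc n) * t ^ n) + (\<Sum>n. ?c (Suc n) * t ^ n)
       = (\<Sum>n. (diffs (diffs ?c) n + (nu + 1) * diffs ?c (Suc n) + ?c (Suc n)) * t ^ n)"
  proof -
    have "(\<Sum>n. (diffs (diffs ?c) n + (nu + 1) * diffs ?c (Suc n) + ?c (Suc n)) * t ^ n)
        = (\<Sum>n. diffs (diffs ?c) n * t ^ n + (nu + 1) * (diffs ?c (Suc n) * t ^ n) + ?c (Suc n) * t ^ n)"
      by (simp add: algebra_simps)
    also have "\<dots> = (\<Sum>n. diffs (diffs ?c) n * t ^ n + (nu + 1) * (diffs ?c (Suc n) * t ^ n)) + (\<Sum>n. ?c (Suc n) * t ^ n)"
      by (intro suminf_add[symmetric] summable_add summable_mult s2 s1' s0')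
    also have "(\<Sum>n. diffs (diffs ?c) n * t ^ n + (nu + 1) * (diffs ?c (Suc n) * t ^ n))
        = (\<Sum>n. diffs (diffs ?c) n * t ^ n) + (\<Sum>n. (nu + 1) * (diffs ?c (Suc n) * t ^ n))"
      by (intro suminf_add[symmetric] summable_mult s2 s1')
    also have "(\<Sum>n. (nu + 1) * (diffs ?c (Suc n) * t ^ n)) = (nu + 1) * (\<Sum>n. diffs ?c (Suc n) * t ^ n)"
      by (intro suminf_mult s1')
    finally show ?thesis by simp
  qed
  also have "\<dots> = 0" unfolding cn by simp
  finally show ?thesis using c0 by simp
qed

lemma gg_deriv: "nu \<ge> 0 \<Longrightarrow> (gg nu has_field_derivative gd nu t) (at t)"
  unfolding gg_def[abs_def] gd_def
  by (rule termdiffs_strong_converges_everywhere, rule fact_bound_summable, rule cc_bound)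

lemma gd_deriv: "nu \<ge> 0 \<Longrightarrow> (gd nu has_field_derivative gdd nu t) (at t)"
  unfolding gdd_def gd_def[abs_def]
  by (rule termdiffs_strong_converges_everywhere, rule fact_bound_summable,
      rule fact_bound_diffs, rule cc_bound)

lemma tail_bound:
  fixes c :: "nat \<Rightarrow> real"
  assumes b: "\<And>n. \<bar>c n\<bar> \<le> 1" and t: "0 \<le> t" "t < 1"
  shows "\<bar>(\<Sum>n. c n * t ^ n) - (\<Sum>n<N. c n * t ^ n)\<bar> \<le> t ^ N / (1 - t)"
proof -
  have sg: "summable (\<lambda>n. t ^ n)" using t by (intro summable_geometric) auto
  have sa: "summable (\<lambda>n. \<bar>c n * t ^ n\<bar>)"
  proof (rule summable_comparison_test[OF _ sg], intro exI allI impI)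
    fix n :: nat
    have "\<bar>c n\<bar> * t ^ n \<le> 1 * t ^ n" using b t by (intro mult_right_mono) auto
    then show "norm \<bar>c n * t ^ n\<bar> \<le> t ^ n" using t by (simp add: abs_mult)
  qed
  have s: "summable (\<lambda>n. c n * t ^ n)" by (rule summable_rabs_cancel[OF sa])
  have sa': "summable (\<lambda>n. \<bar>c (n + N) * t ^ (n + N)\<bar>)"
    by (rule iffD2[OF summable_iff_shift sa])
  have "(\<Sum>n. c n * t ^ n) - (\<Sum>n<N. c n * t ^ n) = (\<Sum>n. c (n + N) * t ^ (n + N))"
    using suminf_split_initial_segment[OF s, of N] by simp
  also have "\<bar>\<dots>\<bar> \<le> (\<Sum>n. \<bar>c (n + N) * t ^ (n + N)\<bar>)"
    by (rule summable_rabs[OF sa'])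
  also have "\<dots> \<le> (\<Sum>n. t ^ N * t ^ n)"
  proof (rule suminf_le)
    fix n
    have "\<bar>c (n + N)\<bar> * t ^ (n + N) \<le> 1 * t ^ (n + N)" using b t by (intro mult_right_mono) auto
    then show "\<bar>c (n + N) * t ^ (n + N)\<bar> \<le> t ^ N * t ^ n"
      using t by (simp add: abs_mult power_add mult.commute)
  next
    show "summable (\<lambda>n. \<bar>c (n + N) * t ^ (n + N)\<bar>)"
      by (rule sa')
  next
    show "summable (\<lambda>n. t ^ N * t ^ n)" using sg by (rule summable_mult)
  qed
  also have "\<dots> = t ^ N / (1 - t)"
  proof -
    have "(\<Sum>n. t ^ N * t ^ n) = t ^ N * (\<Sum>n. t ^ n)" by (rule suminf_mult[OF sg])
    also have "(\<Sum>n. t ^ n) = 1 / (1 - t)" by (rule suminf_geometric) (use t in auto)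
    finally show ?thesis by simp
  qed
  finally show ?thesis .
qed

lemma energy:
  assumes nu: "nu \<ge> 0" and "t0 \<le> t"
  shows "(gg nu t)\<^sup>2 + t * (gd nu t)\<^sup>2 \<le> (gg nu t0)\<^sup>2 + t0 * (gd nu t0)\<^sup>2"
proof -
  let ?H = "\<lambda>t. (gg nu t)\<^sup>2 + t * (gd nu t)\<^sup>2"
  have "?H t0 \<ge> ?H t"
  proof (rule DERIV_nonpos_imp_nonincreasing[OF assms(2)])
    fix y assume "t0 \<le> y" "y \<le> t"
    have d: "(?H has_field_derivative
        (2 * gg nu y * gd nu y + (1 * (gd nu y)\<^sup>2 + y * (2 * gd nu y * gdd nu y)))) (at y)"
      unfolding power2_eq_square
      by (rule derivative_eq_intros gg_deriv gd_deriv DERIV_ident nu refl)+ (simp add: algebra_simps)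
    have o: "y * gdd nu y = - (nu + 1) * gd nu y - gg nu y" using ode[OF nu, of y] by algebra
    have "2 * gg nu y * gd nu y + (1 * (gd nu y)\<^sup>2 + y * (2 * gd nu y * gdd nu y))
        = 2 * gg nu y * gd nu y + (gd nu y)\<^sup>2 + 2 * gd nu y * (y * gdd nu y)"
      by (simp add: algebra_simps)
    also have "\<dots> = - (2 * nu + 1) * (gd nu y)\<^sup>2"
      unfolding o by (simp add: algebra_simps power2_eq_square)
    also have "\<dots> \<le> 0" using nu by (intro mult_nonpos_nonneg) auto
    finally show "\<exists>z. (?H has_real_derivative z) (at y) \<and> z \<le> 0" using d by blast
  qed
  then show ?thesis by simp
qed


lemma cc_le1: "nu \<ge> 0 \<Longrightarrow> \<bar>cc nu n\<bar> \<le> 1"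
  using cc_bound[of nu n] by (smt (verit) divide_le_eq_1 fact_ge_1)

lemma dcc_le1: "nu \<ge> 0 \<Longrightarrow> \<bar>diffs (cc nu) n\<bar> \<le> 1"
  using fact_bound_diffs[of "cc nu" n] cc_bound[of nu] by (smt (verit) divide_le_eq_1 fact_ge_1)

lemma Hbound:
  assumes nu: "nu \<ge> 0" and t: "0 \<le> t0" "t0 < 1"
  assumes B: "(\<bar>\<Sum>n<N. cc nu n * t0 ^ n\<bar> + t0 ^ N / (1 - t0))\<^sup>2
     + t0 * (\<bar>\<Sum>n<N. diffs (cc nu) n * t0 ^ n\<bar> + t0 ^ N / (1 - t0))\<^sup>2 \<le> B"
  shows "(gg nu t0)\<^sup>2 + t0 * (gd nu t0)\<^sup>2 \<le> B"
proof -
  let ?e = "t0 ^ N / (1 - t0)"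
  have "\<bar>gg nu t0 - (\<Sum>n<N. cc nu n * t0 ^ n)\<bar> \<le> ?e"
    unfolding gg_def by (rule tail_bound[OF cc_le1[OF nu] t])
  then have a: "\<bar>gg nu t0\<bar> \<le> \<bar>\<Sum>n<N. cc nu n * t0 ^ n\<bar> + ?e" by linarith
  have "\<bar>gd nu t0 - (\<Sum>n<N. diffs (cc nu) n * t0 ^ n)\<bar> \<le> ?e"
    unfolding gd_def by (rule tail_bound[OF dcc_le1[OF nu] t])
  then have b: "\<bar>gd nu t0\<bar> \<le> \<bar>\<Sum>n<N. diffs (cc nu) n * t0 ^ n\<bar> + ?e" by linarith
  have "(gg nu t0)\<^sup>2 \<le> (\<bar>\<Sum>n<N. cc nu n * t0 ^ n\<bar> + ?e)\<^sup>2"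
    using a by (metis abs_ge_zero power2_abs power_mono)
  moreover have "(gd nu t0)\<^sup>2 \<le> (\<bar>\<Sum>n<N. diffs (cc nu) n * t0 ^ n\<bar> + ?e)\<^sup>2"
    using b by (metis abs_ge_zero power2_abs power_mono)
  ultimately show ?thesis using B t by (smt (verit) mult_left_mono)
qed

lemma num2: "(gg 1 (1/5))\<^sup>2 + (1/5) * (gd 1 (1/5))\<^sup>2 \<le> 0.8649"
  by (rule Hbound[where N=8]) (simp_all add: cc_def diffs_def eval_nat_numeral pochhammer_Suc fact_Suc)

lemma num3: "(gg (3/2) (1/4))\<^sup>2 + (1/4) * (gd (3/2) (1/4))\<^sup>2 \<le> 0.8649"
  by (rule Hbound[where N=8]) (simp_all add: cc_def diffs_def eval_nat_numeral pochhammer_Suc fact_Suc)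

lemma rho_gg:
  assumes s: "s > 0" and nu: "real d / 2 > 0"
  shows "rho d s = gg (real d / 2) (s\<^sup>2 / 4)"
proof -
  define nu where "nu = real d / 2"
  have nu0: "nu > 0" using nu nu_def by simp
  define K where "K = (s / 2) powr nu / Gamma (nu + 1)"
  have G: "Gamma (nu + 1) > 0" using nu0 by (intro Gamma_real_pos) auto
  have notn: "nu + 1 \<notin> \<int>\<^sub>\<le>\<^sub>0" using nu0 nonpos_Ints_nonpos by force
  have tm: "(-1) ^ m / (fact m * Gamma (real m + nu + 1)) * (s / 2) powr (2 * real m + nu)
      = K * (cc nu m * (s\<^sup>2 / 4) ^ m)" for m
  proof -
    have g: "Gamma (real m + nu + 1) = pochhammer (nu + 1) m * Gamma (nu + 1)"
      using pochhammer_Gamma[OF notn, of m] G by (simp add: field_simps)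
    have p1: "(s / 2) powr (2 * real m) = (s / 2) ^ (2 * m)"
      using powr_realpow[of "s/2" "2*m"] s by simp
    have p2: "(s / 2) ^ (2 * m) = (s\<^sup>2 / 4) ^ m"
      by (simp add: power_mult power_divide)
    have p: "(s / 2) powr (2 * real m + nu) = (s\<^sup>2 / 4) ^ m * (s / 2) powr nu"
      using s by (simp add: powr_add p1 p2)
    show ?thesis unfolding g p K_def cc_def by (simp add: field_simps)
  qed
  have sm: "summable (\<lambda>m. cc nu m * (s\<^sup>2 / 4) ^ m)"
    using fact_bound_summable cc_bound nu0 by (metis less_imp_le)
  have "bessel_J nu s = K * gg nu (s\<^sup>2 / 4)"
    unfolding bessel_J_def tm gg_def by (rule suminf_mult[OF sm])
  moreover have "(2 / s) powr nu * Gamma (nu + 1) * K = 1"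
    unfolding K_def using G s by (simp add: powr_mult[symmetric] field_simps)
  ultimately show ?thesis unfolding rho_def nu_def[symmetric] by (metis mult.assoc mult_1)
qed

lemma final_bound:
  assumes nu: "nu \<ge> 0" and t0: "0 \<le> t0" "t0 \<le> t"
    and B: "(gg nu t0)\<^sup>2 + t0 * (gd nu t0)\<^sup>2 \<le> 0.8649"
  shows "\<bar>gg nu t\<bar> \<le> 1 - 0.07"
proof -
  have "(gg nu t)\<^sup>2 \<le> (gg nu t)\<^sup>2 + t * (gd nu t)\<^sup>2" using t0 by simp
  also have "\<dots> \<le> (gg nu t0)\<^sup>2 + t0 * (gd nu t0)\<^sup>2" by (rule energy[OF nu t0(2)])
  also have "\<dots> \<le> (1 - 0.07)\<^sup>2" using B by (simp add: power2_eq_square)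
  finally have "\<bar>gg nu t\<bar>\<^sup>2 \<le> (1 - 0.07)\<^sup>2" by simp
  then show ?thesis by (rule power2_le_imp_le) simp
qed

theorem lemma4:
  fixes kappa :: real and x x' :: "real ^ 'n"
  assumes "CARD('n) \<in> {2, 3}"
    and "kappa > 0"
    and "(2 * kappa) * norm (x - x') / sqrt (real CARD('n) + 2) \<ge> 1 / sqrt 5"
  shows "\<bar>kernK kappa x x'\<bar> \<le> 1 - 0.07"
proof -
  define d where "d = CARD('n)"
  define s where "s = (2 * kappa) * norm (x - x')"
  have dd: "d = 2 \<or> d = 3" using assms(1) d_def by auto
  have q: "sqrt (real d + 2) > 0" by simp
  have "1 / sqrt 5 \<le> s / sqrt (real d + 2)" using assms(3) unfolding s_def d_def .
  then have h: "sqrt (real d + 2) / sqrt 5 \<le> s" using q by (simp add: field_simps)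
  have pos: "sqrt (real d + 2) / sqrt 5 > 0" by simp
  have sp: "s > 0" using h pos by linarith
  have "(sqrt (real d + 2) / sqrt 5)\<^sup>2 \<le> s\<^sup>2" using h pos by (intro power_mono) auto
  then have s2: "(real d + 2) / 5 \<le> s\<^sup>2" by (simp add: power_divide)
  have K: "kernK kappa x x' = gg (real d / 2) (s\<^sup>2 / 4)"
    unfolding kernK_def d_def[symmetric] s_def[symmetric] using sp dd
    by (intro rho_gg) auto
  show ?thesis
  proof (cases "d = 2")
    case True
    have "\<bar>gg 1 (s\<^sup>2 / 4)\<bar> \<le> 1 - 0.07"
      by (rule final_bound[OF _ _ _ num2]) (use s2 True in auto)
    then show ?thesis using K True by simp
  next
    case False
    then have d3: "d = 3" using dd by simp
    have "\<bar>gg (3/2) (s\<^sup>2 / 4)\<bar> \<le> 1 - 0.07"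
      by (rule final_bound[OF _ _ _ num3]) (use s2 d3 in auto)
    then show ?thesis using K d3 by simp
  qed
qed

end
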